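(* Let $R$ be a ring and $R\le S=R[s_1,\dots,s_k]$ a ring extension generated as an $R$-algebra by elements $s_1,\dots,s_k\in S$ that commute with each other and satisfy $s_iR\subseteq Rs_i$ for all $i$. If $M$ is an $S$-module that is finitely presented as an $R$-module, then $M$ is finitely presented as an $S$-module. *)

theory Defs
  imports Main
begin

definition is_subring :: "'s::ring_1 set \<Rightarrow> bool" where
  "is_subring R \<longleftrightarrow> 0 \<in> R \<and> 1 \<in> R \<and>
     (\<forall>x\<in>R. \<forall>y\<in>R. x + y \<in> R \<and> x - y \<in> R \<and> x * y \<in> R)"

definition subring_generated :: "'s::ring_1 set \<Rightarrow> 's set" where
  "subring_generated A = \<Inter>{T. is_subring T \<and> A \<subseteq> T}"

definition is_left_module :: "('s::ring_1 \<Rightarrow> 'm::ab_group_add \<Rightarrow> 'm) \<Rightarrow> bool" where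
  "is_left_module act \<longleftrightarrow>
     (\<forall>a b x. act (a + b) x = act a x + act b x) \<and>
     (\<forall>a x y. act a (x + y) = act a x + act a y) \<and>
     (\<forall>a b x. act (a * b) x = act a (act b x)) \<and>
     (\<forall>x. act 1 x = x)"

text \<open>Vectors of length n with entries in A (the free left A-module A^n),
  represented as functions nat => 's vanishing from index n on.\<close>
definition vecs :: "'s::ring_1 set \<Rightarrow> nat \<Rightarrow> (nat \<Rightarrow> 's) set" where
  "vecs A n = {c. (\<forall>i<n. c i \<in> A) \<and> (\<forall>i\<ge>n. c i = 0)}"

text \<open>The module (whole type 'm, with action act restricted to the subring A) is finitely
  presented as a left A-module: there are finitely many generators g 0, ..., g (n-1) such that
  every element is an A-linear combination of them, and the module of relations
  (the kernel of A^n -> M) is a finitely generated A-submodule of A^n.\<close>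
definition finitely_presented_over ::
  "'s::ring_1 set \<Rightarrow> ('s \<Rightarrow> 'm::ab_group_add \<Rightarrow> 'm) \<Rightarrow> bool" where
  "finitely_presented_over A act \<longleftrightarrow>
     (\<exists>(n::nat) (g::nat \<Rightarrow> 'm).
        (\<forall>x. \<exists>c\<in>vecs A n. x = (\<Sum>i<n. act (c i) (g i))) \<and>
        (\<exists>(m::nat) (v::nat \<Rightarrow> nat \<Rightarrow> 's).
           (\<forall>j<m. v j \<in> vecs A n) \<and>
           {c \<in> vecs A n. (\<Sum>i<n. act (c i) (g i)) = 0} =
           {(\<lambda>i. \<Sum>j<m. a j * v j i) | a. \<forall>j<m. a j \<in> A}))"

end

theory Submission
  imports Defs
begin

lemma act_zero_left:
  assumes "is_left_module act" shows "act 0 x = 0"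
proof -
  have "act (0+0) x = act 0 x + act 0 x" using assms unfolding is_left_module_def by blast
  then show ?thesis by simp
qed

lemma act_zero_right:
  assumes "is_left_module act" shows "act a 0 = 0"
proof -
  have "act a (0+0) = act a 0 + act a 0" using assms unfolding is_left_module_def by blast
  then show ?thesis by simp
qed

lemma act_diff_left:
  assumes "is_left_module act" shows "act (a - b) x = act a x - act b x"
proof -
  have "act (a - b + b) x = act (a - b) x + act b x" using assms unfolding is_left_module_def by blast
  then show ?thesis by (simp add: eq_diff_eq)
qed

lemma act_sum_left:
  assumes "is_left_module act" shows "act (\<Sum>j\<in>A. f j) x = (\<Sum>j\<in>A. act (f j) x)"
proof (induction A rule: infinite_finite_induct)
  case (infinite A) then show ?case using act_zero_left[OF assms] by simp
next
  case empty then show ?case using act_zero_left[OF assms] by simp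
next
  case (insert a A) then show ?case using assms unfolding is_left_module_def by simp
qed

lemma act_sum_right:
  assumes "is_left_module act" shows "act a (\<Sum>j\<in>A. f j) = (\<Sum>j\<in>A. act a (f j))"
proof (induction A rule: infinite_finite_induct)
  case (infinite A) then show ?case using act_zero_right[OF assms] by simp
next
  case empty then show ?case using act_zero_right[OF assms] by simp
next
  case (insert a A) then show ?case using assms unfolding is_left_module_def by simp
qed

theorem mainTheorem11:
  fixes R :: "'s::ring_1 set"
    and s :: "nat \<Rightarrow> 's"
    and k :: nat
    and act :: "'s \<Rightarrow> 'm::ab_group_add \<Rightarrow> 'm"
  assumes R_subring: "is_subring R"
    and generated: "subring_generated (R \<union> s ` {..<k}) = UNIV"
    and commute: "\<forall>i<k. \<forall>j<k. s i * s j = s j * s i"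
    and normalizing: "\<forall>i<k. \<forall>r\<in>R. \<exists>r'\<in>R. s i * r = r' * s i"
    and module: "is_left_module act"
    and fp_R: "finitely_presented_over R act"
  shows "finitely_presented_over UNIV act"
proof -
  have R0: "0 \<in> R" and R1: "1 \<in> R"
    and Radd: "\<And>x y. x \<in> R \<Longrightarrow> y \<in> R \<Longrightarrow> x + y \<in> R"
    and Rdiff: "\<And>x y. x \<in> R \<Longrightarrow> y \<in> R \<Longrightarrow> x - y \<in> R"
    and Rmult: "\<And>x y. x \<in> R \<Longrightarrow> y \<in> R \<Longrightarrow> x * y \<in> R"
    using R_subring unfolding is_subring_def by auto
  have act_add: "\<And>a b x. act (a + b) x = act a x + act b x"
    and act_addr: "\<And>a x y. act a (x + y) = act a x + act a y"
    and act_mult: "\<And>a b x. act (a * b) x = act a (act b x)"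
    using module unfolding is_left_module_def by auto
  obtain n g and m :: nat and v :: "nat \<Rightarrow> nat \<Rightarrow> 's" where
    gen: "\<forall>x. \<exists>c\<in>vecs R n. x = (\<Sum>i<n. act (c i) (g i))" and
    vR: "\<forall>j<m. v j \<in> vecs R n" and
    ker: "{c \<in> vecs R n. (\<Sum>i<n. act (c i) (g i)) = 0} =
           {(\<lambda>i. \<Sum>j<m. a j * v j i) | a. \<forall>j<m. a j \<in> R}"
  proof -
    from fp_R obtain n g where A: "\<forall>x. \<exists>c\<in>vecs R n. x = (\<Sum>i<n. act (c i) (g i))" and
      B: "\<exists>(m::nat) (v::nat \<Rightarrow> nat \<Rightarrow> 's). (\<forall>j<m. v j \<in> vecs R n) \<and>
           {c \<in> vecs R n. (\<Sum>i<n. act (c i) (g i)) = 0} =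
           {(\<lambda>i. \<Sum>j<m. a j * v j i) | a. \<forall>j<m. a j \<in> R}"
      unfolding finitely_presented_over_def
      apply (elim exE conjE) apply (rule that) apply assumption apply (intro exI conjI) apply assumption+ done
    from B obtain m :: nat and v where "\<forall>j<m. v j \<in> vecs R n" "{c \<in> vecs R n. (\<Sum>i<n. act (c i) (g i)) = 0} =
           {(\<lambda>i. \<Sum>j<m. a j * v j i) | a. \<forall>j<m. a j \<in> R}" by (elim exE conjE)
    then show ?thesis using A that by blast
  qed
  have "\<forall>l i. \<exists>c. c \<in> vecs R n \<and> act (s l) (g i) = (\<Sum>p<n. act (c p) (g p))"
    using gen by blast
  then obtain \<rho> where \<rho>v: "\<And>l i. \<rho> l i \<in> vecs R n"
    and \<rho>e: "\<And>l i. act (s l) (g i) = (\<Sum>p<n. act (\<rho> l i p) (g p))" by metis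
  define w where "w l i = (\<lambda>p. (if p = i then s l else 0) - \<rho> l i p)" for l i
  define V where "V j = (if j < m then v j else w ((j-m) div n) ((j-m) mod n))" for j
  define M where "M = m + k*n"
  define Sp where "Sp = {(\<lambda>p. \<Sum>j<M. a j * V j p) | a. True}"
  define P where "P c \<longleftrightarrow> (\<exists>r\<in>vecs R n. \<exists>u\<in>Sp. c = (\<lambda>p. r p + u p))" for c

  have SpI: "(\<lambda>p. \<Sum>j<M. a j * V j p) \<in> Sp" for a unfolding Sp_def by blast
  have V_w: "V (m + l*n + i) = w l i" if "i < n" for l i
    using that by (simp add: V_def)
  have V_vanish: "V j p = 0" if "j < M" "n \<le> p" for j p
  proof (cases "j < m")
    case True then show ?thesis using vR that unfolding V_def vecs_def by auto
  next
    case False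
    then have "n > 0" using that M_def by (cases n) auto
    then have "(j-m) mod n < n" by simp
    then show ?thesis using False that \<rho>v[of "(j-m) div n" "(j-m) mod n"]
      unfolding V_def w_def vecs_def by auto
  qed
  have V_ker: "(\<Sum>p<n. act (V j p) (g p)) = 0" if "j < M" for j
  proof (cases "j < m")
    case True
    have "v j = (\<lambda>i. \<Sum>j'<m. (if j' = j then 1 else 0) * v j' i)"
    proof
      fix i
      have "(\<Sum>j'<m. (if j' = j then 1 else 0) * v j' i) = (\<Sum>j'<m. if j = j' then v j' i else 0)"
        by (rule sum.cong) auto
      then show "v j i = (\<Sum>j'<m. (if j' = j then 1 else 0) * v j' i)" using True by (simp add: sum.delta)
    qed
    then have "v j \<in> {(\<lambda>i. \<Sum>j<m. a j * v j i) | a. \<forall>j<m. a j \<in> R}"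
      using R0 R1 by force
    then have "v j \<in> {c \<in> vecs R n. (\<Sum>i<n. act (c i) (g i)) = 0}" using ker by simp
    then show ?thesis using True by (simp add: V_def)
  next
    case False
    then have n0: "n > 0" using that M_def by (cases n) auto
    define l where "l = (j-m) div n"
    define i where "i = (j-m) mod n"
    have i: "i < n" using n0 i_def by simp
    have "(\<Sum>p<n. act (V j p) (g p)) = (\<Sum>p<n. act (if p = i then s l else 0) (g p) - act (\<rho> l i p) (g p))"
      using False unfolding l_def i_def by (simp add: V_def w_def act_diff_left[OF module])
    also have "\<dots> = (\<Sum>p<n. act (if p = i then s l else 0) (g p)) - (\<Sum>p<n. act (\<rho> l i p) (g p))"
      by (simp add: sum_subtractf)
    also have "(\<Sum>p<n. act (if p = i then s l else 0) (g p)) = (\<Sum>p<n. if p = i then act (s l) (g p) else 0)"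
      by (rule sum.cong) (auto simp: act_zero_left[OF module])
    also have "\<dots> = act (s l) (g i)" using i by (simp add: sum.delta')
    finally show ?thesis using \<rho>e by simp
  qed
  have Sp_add: "(\<lambda>p. u p + u' p) \<in> Sp" if "u \<in> Sp" "u' \<in> Sp" for u u'
  proof -
    obtain a b where "u = (\<lambda>p. \<Sum>j<M. a j * V j p)" "u' = (\<lambda>p. \<Sum>j<M. b j * V j p)"
      using \<open>u \<in> Sp\<close> \<open>u' \<in> Sp\<close> unfolding Sp_def by auto
    then have "(\<lambda>p. u p + u' p) = (\<lambda>p. \<Sum>j<M. (a j + b j) * V j p)"
      by (simp add: distrib_right sum.distrib)
    then show ?thesis by (simp add: SpI)
  qed
  have Sp_scale: "(\<lambda>p. x * u p) \<in> Sp" if "u \<in> Sp" for u x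
  proof -
    obtain a where "u = (\<lambda>p. \<Sum>j<M. a j * V j p)"
      using \<open>u \<in> Sp\<close> unfolding Sp_def by auto
    then have "(\<lambda>p. x * u p) = (\<lambda>p. \<Sum>j<M. (x * a j) * V j p)"
      by (simp add: sum_distrib_left mult.assoc)
    then show ?thesis by (simp add: SpI)
  qed
  have Sp_gen: "V j \<in> Sp" if "j < M" for j
  proof -
    have "V j = (\<lambda>p. \<Sum>j'<M. (if j' = j then 1 else 0) * V j' p)"
    proof
      fix i
      have "(\<Sum>j'<M. (if j' = j then 1 else 0) * V j' i) = (\<Sum>j'<M. if j = j' then V j' i else 0)"
        by (rule sum.cong) auto
      then show "V j i = (\<Sum>j'<M. (if j' = j then 1 else 0) * V j' i)" using that by (simp add: sum.delta)
    qed
    then show ?thesis by (simp add: SpI)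
  qed
  have Sp_zero: "(\<lambda>p. 0) \<in> Sp" using SpI[of "\<lambda>_. 0"] by simp
  have Sp_vanish: "u p = 0" if "u \<in> Sp" "n \<le> p" for u p
    using that V_vanish unfolding Sp_def by auto
  have Sp_ker: "(\<Sum>p<n. act (u p) (g p)) = 0" if "u \<in> Sp" for u
  proof -
    obtain a where u: "u = (\<lambda>p. \<Sum>j<M. a j * V j p)"
      using \<open>u \<in> Sp\<close> unfolding Sp_def by auto
    have "(\<Sum>p<n. act (u p) (g p)) = (\<Sum>p<n. \<Sum>j<M. act (a j) (act (V j p) (g p)))"
      by (simp add: u act_sum_left[OF module] act_mult)
    also have "\<dots> = (\<Sum>j<M. \<Sum>p<n. act (a j) (act (V j p) (g p)))" by (rule sum.swap)
    also have "\<dots> = (\<Sum>j<M. act (a j) (\<Sum>p<n. act (V j p) (g p)))"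
      by (simp add: act_sum_right[OF module])
    also have "\<dots> = 0" using V_ker by (simp add: act_zero_right[OF module])
    finally show ?thesis .
  qed

  have vecs_add: "(\<lambda>p. r p + r' p) \<in> vecs R n" if "r \<in> vecs R n" "r' \<in> vecs R n" for r r'
    using that Radd unfolding vecs_def by auto
  have P_add: "P (\<lambda>p. c p + c' p)" if Pc: "P c" and Pc': "P c'" for c c'
  proof -
    obtain r u where h1: "r \<in> vecs R n" "u \<in> Sp" "c = (\<lambda>p. r p + u p)"
      using Pc unfolding P_def by (elim bexE) 
    obtain r' u' where h2: "r' \<in> vecs R n" "u' \<in> Sp" "c' = (\<lambda>p. r' p + u' p)"
      using Pc' unfolding P_def by (elim bexE)
    have e: "(\<lambda>p. c p + c' p) = (\<lambda>p. (r p + r' p) + (u p + u' p))"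
      unfolding h1(3) h2(3) by (simp add: add_ac)
    have "(\<lambda>p. r p + r' p) \<in> vecs R n" using h1(1) h2(1) by (rule vecs_add)
    moreover have "(\<lambda>p. u p + u' p) \<in> Sp" using h1(2) h2(2) by (rule Sp_add)
    ultimately show ?thesis unfolding P_def
      apply - apply (rule bexI[where x="\<lambda>p. r p + r' p"]) apply (rule bexI[where x="\<lambda>p. u p + u' p"])
      using e by auto
  qed
  have P_zero: "P (\<lambda>p. 0)"
  proof -
    have "(\<lambda>p::nat. 0::'s) \<in> vecs R n" using R0 by (simp add: vecs_def)
    then show ?thesis unfolding P_def
      apply - apply (rule bexI[where x="\<lambda>p. 0"]) apply (rule bexI[where x="\<lambda>p. 0"])
      using Sp_zero by auto
  qed
  have P_sum: "P (\<lambda>q. \<Sum>p\<in>A. f p q)" if "finite A" "\<forall>p\<in>A. P (f p)" for A f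
    using that
  proof (induction A rule: finite_induct)
    case empty then show ?case using P_zero by simp
  next
    case (insert a A) then show ?case using P_add[of "f a" "\<lambda>q. \<Sum>p\<in>A. f p q"] by simp
  qed
  have P_R: "P r" if "r \<in> vecs R n" for r
  proof -
    have "r = (\<lambda>p. r p + 0)" by simp
    then show ?thesis unfolding P_def
      apply - apply (rule bexI[where x=r]) apply (rule bexI[where x="\<lambda>p. 0"])
      using that Sp_zero by auto
  qed
  have P_Sp: "P u" if "u \<in> Sp" for u
  proof -
    have "u = (\<lambda>p. 0 + u p)" by simp
    moreover have "(\<lambda>p::nat. 0::'s) \<in> vecs R n" using R0 by (simp add: vecs_def)
    ultimately show ?thesis unfolding P_def
      apply - apply (rule bexI[where x="\<lambda>p. 0"]) apply (rule bexI[where x=u])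
      using that by auto
  qed

  define T where "T = {x. \<forall>i<n. \<forall>r\<in>R. P (\<lambda>p. if p = i then x * r else 0)}"
  have T_sub: "is_subring T"
    unfolding is_subring_def
  proof (intro conjI ballI)
    show "0 \<in> T" unfolding T_def using P_zero by (simp cong: if_cong)
  next
    show "1 \<in> T" unfolding T_def using R0 by (auto intro!: P_R simp: vecs_def)
  next
    fix x y assume x: "x \<in> T" and y: "y \<in> T"
    show "x + y \<in> T" unfolding T_def
    proof (intro CollectI allI impI ballI)
      fix i r assume "i < n" "r \<in> R"
      then have "P (\<lambda>p. (if p = i then x * r else 0) + (if p = i then y * r else 0))"
        using x y T_def P_add by auto
      then show "P (\<lambda>p. if p = i then (x + y) * r else 0)"
        by (simp add: distrib_right if_distrib cong: if_cong)
    qed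
    show "x - y \<in> T" unfolding T_def
    proof (intro CollectI allI impI ballI)
      fix i r assume ir: "i < n" "r \<in> R"
      have "P (\<lambda>p. if p = i then y * r else 0)" using ir y T_def by auto
      then obtain r' u' where ru: "r' \<in> vecs R n" "u' \<in> Sp" "(\<lambda>p. if p = i then y * r else 0) = (\<lambda>p. r' p + u' p)"
        unfolding P_def by blast
      have "P (\<lambda>p. - r' p + - u' p)"
      proof (rule P_add)
        show "P (\<lambda>p. - r' p)" using ru(1) Rdiff[OF R0] by (intro P_R) (auto simp: vecs_def)
        show "P (\<lambda>p. - u' p)" using Sp_scale[OF ru(2), of "-1"] by (intro P_Sp) simp
      qed
      moreover have "(\<lambda>p. - r' p + - u' p) = (\<lambda>p. if p = i then (- y) * r else 0)"
      proof
        fix p show "- r' p + - u' p = (if p = i then (- y) * r else 0)"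
          using fun_cong[OF ru(3), of p] by (auto simp: algebra_simps neg_eq_iff_add_eq_0 split: if_splits)
      qed
      ultimately have "P (\<lambda>p. if p = i then (- y) * r else 0)" by simp
      moreover have "P (\<lambda>p. if p = i then x * r else 0)" using ir x T_def by auto
      ultimately have "P (\<lambda>p. (if p = i then x * r else 0) + (if p = i then (- y) * r else 0))"
        using P_add by blast
      then show "P (\<lambda>p. if p = i then (x - y) * r else 0)"
        by (simp add: algebra_simps if_distrib cong: if_cong)
    qed
    show "x * y \<in> T" unfolding T_def
    proof (intro CollectI allI impI ballI)
      fix i r assume ir: "i < n" "r \<in> R"
      have "P (\<lambda>p. if p = i then y * r else 0)" using ir y T_def by auto
      then obtain r0 u where ru: "r0 \<in> vecs R n" "u \<in> Sp" "(\<lambda>p. if p = i then y * r else 0) = (\<lambda>p. r0 p + u p)"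
        unfolding P_def by blast
      have "P (\<lambda>q. (\<Sum>p\<in>{..<n}. (\<lambda>p q. if q = p then x * r0 p else 0) p q) + x * u q)"
      proof (rule P_add)
        show "P (\<lambda>q. \<Sum>p\<in>{..<n}. (\<lambda>p q. if q = p then x * r0 p else 0) p q)"
        proof (rule P_sum)
          show "\<forall>p\<in>{..<n}. P (\<lambda>q. if q = p then x * r0 p else 0)"
          proof
            fix p assume "p \<in> {..<n}"
            then have "p < n" "r0 p \<in> R" using ru(1) by (auto simp: vecs_def)
            then show "P (\<lambda>q. if q = p then x * r0 p else 0)" using x unfolding T_def by blast
          qed
        qed simp
        show "P (\<lambda>q. x * u q)" using Sp_scale[OF ru(2)] P_Sp by blast
      qed
      moreover have "(\<lambda>q. (\<Sum>p\<in>{..<n}. (\<lambda>p q. if q = p then x * r0 p else 0) p q) + x * u q)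
          = (\<lambda>p. if p = i then x * y * r else 0)"
      proof
        fix q
        have "(\<Sum>p\<in>{..<n}. (\<lambda>p q. if q = p then x * r0 p else 0) p q) = x * r0 q"
          using ru(1) by (simp add: sum.delta vecs_def)
        moreover have "r0 q + u q = (if q = i then y * r else 0)" using fun_cong[OF ru(3), of q] by simp
        ultimately show "(\<Sum>p\<in>{..<n}. (\<lambda>p q. if q = p then x * r0 p else 0) p q) + x * u q
            = (if q = i then x * y * r else 0)"
          by (metis distrib_left mult.assoc mult_zero_right)
      qed
      ultimately show "P (\<lambda>p. if p = i then x * y * r else 0)" by simp
    qed
  qed
  have RT: "R \<union> s ` {..<k} \<subseteq> T"
  proof
    fix x assume "x \<in> R \<union> s ` {..<k}"
    then show "x \<in> T"
    proof
      assume xR: "x \<in> R"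
      show "x \<in> T" unfolding T_def using xR R0 Rmult by (auto intro!: P_R simp: vecs_def)
    next
      assume "x \<in> s ` {..<k}"
      then obtain l where l: "l < k" "x = s l" by auto
      show "x \<in> T" unfolding T_def
      proof (intro CollectI allI impI ballI)
        fix i r assume ir: "i < n" "r \<in> R"
        obtain r'' where r'': "r'' \<in> R" "s l * r = r'' * s l" using normalizing l ir by blast
        have "P (\<lambda>p. r'' * \<rho> l i p + r'' * w l i p)"
        proof (rule P_add)
          show "P (\<lambda>p. r'' * \<rho> l i p)" using \<rho>v[of l i] r'' Rmult R0
            by (intro P_R) (auto simp: vecs_def)
          have "l*n + i < Suc l * n" using ir by simp
          also have "\<dots> \<le> k*n" using l by (intro mult_le_mono1) simp
          finally have "m + l*n + i < M" by (simp add: M_def)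
          then have "V (m + l*n + i) \<in> Sp" by (rule Sp_gen)
          then show "P (\<lambda>p. r'' * w l i p)" using V_w[OF ir(1)] Sp_scale P_Sp by metis
        qed
        moreover have "(\<lambda>p. r'' * \<rho> l i p + r'' * w l i p) = (\<lambda>p. if p = i then x * r else 0)"
          using r'' l by (auto simp: w_def algebra_simps)
        ultimately show "P (\<lambda>p. if p = i then x * r else 0)" by simp
      qed
    qed
  qed
  have "subring_generated (R \<union> s ` {..<k}) \<subseteq> T"
    unfolding subring_generated_def using T_sub RT by (intro Inter_lower) simp
  then have TU: "T = UNIV" using generated by auto

  have kerS: "c \<in> Sp" if c: "c \<in> vecs UNIV n" "(\<Sum>i<n. act (c i) (g i)) = 0" for c
  proof -
    have "P (\<lambda>q. \<Sum>p\<in>{..<n}. (\<lambda>p q. if q = p then c p * 1 else 0) p q)"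
    proof (rule P_sum)
      show "\<forall>p\<in>{..<n}. P (\<lambda>q. if q = p then c p * 1 else 0)"
      proof
        fix p assume "p \<in> {..<n}"
        moreover have "c p \<in> T" by (simp add: TU)
        ultimately show "P (\<lambda>q. if q = p then c p * 1 else 0)" using R1 unfolding T_def by blast
      qed
    qed simp
    moreover have "(\<lambda>q. \<Sum>p\<in>{..<n}. (\<lambda>p q. if q = p then c p * 1 else 0) p q) = c"
    proof
      fix q
      have "(\<Sum>p\<in>{..<n}. (\<lambda>p q. if q = p then c p * 1 else 0) p q) = (if q \<in> {..<n} then c q * 1 else 0)"
        by (rule sum.delta') simp
      then show "(\<Sum>p\<in>{..<n}. (\<lambda>p q. if q = p then c p * 1 else 0) p q) = c q"
        using c(1) by (auto simp: vecs_def)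
    qed
    ultimately have "P c" by simp
    then obtain r0 u where ru: "r0 \<in> vecs R n" "u \<in> Sp" "c = (\<lambda>p. r0 p + u p)"
      unfolding P_def by (elim bexE)
    have "(\<Sum>i<n. act (r0 i) (g i)) = (\<Sum>i<n. act (c i) (g i)) - (\<Sum>i<n. act (u i) (g i))"
      by (simp add: ru(3) act_add sum.distrib)
    then have "(\<Sum>i<n. act (r0 i) (g i)) = 0" using c(2) Sp_ker[OF ru(2)] by simp
    then have "r0 \<in> {c \<in> vecs R n. (\<Sum>i<n. act (c i) (g i)) = 0}" using ru(1) by simp
    then have "r0 \<in> {(\<lambda>i. \<Sum>j<m. a j * v j i) | a. \<forall>j<m. a j \<in> R}" unfolding ker .
    then obtain a where a: "r0 = (\<lambda>i. \<Sum>j<m. a j * v j i)" by auto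
    have "r0 = (\<lambda>p. \<Sum>j<M. (\<lambda>j. if j < m then a j else 0) j * V j p)"
    proof
      fix p
      have "(\<Sum>j<M. (\<lambda>j. if j < m then a j else 0) j * V j p) = (\<Sum>j<m. (\<lambda>j. if j < m then a j else 0) j * V j p)"
        by (rule sum.mono_neutral_right) (auto simp: M_def)
      also have "\<dots> = (\<Sum>j<m. a j * v j p)" by (rule sum.cong) (auto simp: V_def)
      finally show "r0 p = (\<Sum>j<M. (\<lambda>j. if j < m then a j else 0) j * V j p)" using a by simp
    qed
    then have "r0 \<in> Sp" by (simp add: SpI)
    then show ?thesis using Sp_add ru by simp
  qed

  have gU: "\<forall>x. \<exists>c\<in>vecs UNIV n. x = (\<Sum>i<n. act (c i) (g i))"
  proof
    fix x
    obtain c where "c \<in> vecs R n" "x = (\<Sum>i<n. act (c i) (g i))" using gen by blast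
    moreover have "c \<in> vecs UNIV n" using \<open>c \<in> vecs R n\<close> by (simp add: vecs_def)
    ultimately show "\<exists>c\<in>vecs UNIV n. x = (\<Sum>i<n. act (c i) (g i))" by blast
  qed
  have VU: "\<forall>j<M. V j \<in> vecs UNIV n" using V_vanish by (auto simp: vecs_def)
  have e1: "{(\<lambda>i. \<Sum>j<M. a j * V j i) | a. \<forall>j<M. a j \<in> (UNIV::'s set)} = Sp" unfolding Sp_def by simp
  have e2: "{c \<in> vecs UNIV n. (\<Sum>i<n. act (c i) (g i)) = 0} = Sp"
  proof
    show "{c \<in> vecs UNIV n. (\<Sum>i<n. act (c i) (g i)) = 0} \<subseteq> Sp" using kerS by blast
    show "Sp \<subseteq> {c \<in> vecs UNIV n. (\<Sum>i<n. act (c i) (g i)) = 0}"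
    proof
      fix u assume "u \<in> Sp"
      then show "u \<in> {c \<in> vecs UNIV n. (\<Sum>i<n. act (c i) (g i)) = 0}"
        using Sp_ker Sp_vanish unfolding vecs_def by simp
    qed
  qed
  have "\<exists>(m::nat) (v::nat \<Rightarrow> nat \<Rightarrow> 's). (\<forall>j<m. v j \<in> vecs UNIV n) \<and>
           {c \<in> vecs UNIV n. (\<Sum>i<n. act (c i) (g i)) = 0} =
           {(\<lambda>i. \<Sum>j<m. a j * v j i) | a. \<forall>j<m. a j \<in> UNIV}"
    by (rule exI[where x=M], rule exI[where x=V]) (simp only: e1 e2 simp_thms, rule VU)
  then show ?thesis unfolding finitely_presented_over_def
    apply - apply (rule exI[where x=n], rule exI[where x=g]) using gU by (intro conjI)
qed

end
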